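(* Let $(l,k,b)$ be a suspension triplet for $(X_A,\sigma_A)$ and $c=l-k$. If $c'\in C(X_A,\mathbb Z)$ satisfies $[c]=[c']$ in $H^A$, then there exist a suspension triplet $(l',k',b')$ for $(X_A,\sigma_A)$ with $c'=l'-k'$ and a homeomorphism $\Phi:S^{l,k}_{A,b}\to S^{l',k'}_{A,b'}$ such that $\Phi\circ b_A=b'_A$ and $\Phi\circ\phi_{A,t}=\phi_{A,t}\circ\Phi$ for all $t\in\mathbb R_+$, where $b_A(x)=[x,b(x)]\in S^{l,k}_{A,b}$ and $b'_A(x)=[x,b'(x)]\in S^{l',k'}_{A,b'}$ are the base maps.
   Context: Let $N>1$ and $A$ an irreducible $N\times N$ $\{0,1\}$-matrix which is not a permutation matrix. $X_A$ is the compact space of sequences $(x_n)_{n\in\mathbb N}$, $x_n\in\{1,\dots,N\}$, $A(x_n,x_{n+1})=1$, with $\sigma_A((x_n)_n)=(x_{n+1})_n$. $\mathbb Z_+$, $\mathbb R_+$ are nonnegative integers/reals. $H^A$ is the quotient of $C(X_A,\mathbb Z)$ by $\{u-u\circ\sigma_A: u\in C(X_A,\mathbb Z)\}$, $[f]$ the class, $H^A_+$ the classes of $\mathbb Z_+$-valued continuous functions; $[f]\in H^A_+$ is an order unit if for every $[u]\in H^A$ some $n\in\mathbb N$ has $n[f]-[u]\in H^A_+$. A suspension triplet is $(l,k,b)$ with $l,k\in C(X_A,\mathbb R_+)$, $b\in C(X_A,\mathbb R)$ such that $c=l-k$ is integer-valued with $[c]$ an order unit, and $l-b$, $k-b\circ\sigma_A$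 take values in $\mathbb Z_+$. $S^{l,k}_{A,b}$ is the quotient of $\{(x,r)\in X_A\times\mathbb R: r\ge b(x)\}$ by the equivalence relation generated by $(x,r)\sim(\sigma_A(x),r-c(x))$ whenever $r\ge l(x)$, with classes $[x,r]$ and flow $\phi_{A,t}([x,r])=[x,r+t]$, $t\in\mathbb R_+$. *)

theory Defs
  imports "HOL-Analysis.Analysis"
begin

text \<open>Square matrices of size N are functions nat => nat => nat, indices in {1..N}.\<close>

fun matpow :: "nat \<Rightarrow> (nat \<Rightarrow> nat \<Rightarrow> nat) \<Rightarrow> nat \<Rightarrow> nat \<Rightarrow> nat \<Rightarrow> nat" where
  "matpow N A 0 i j = (if i = j then 1 else 0)"
| "matpow N A (Suc n) i j = (\<Sum>m\<in>{1..N}. matpow N A n i m * A m j)"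

definition zero_one_matrix :: "nat \<Rightarrow> (nat \<Rightarrow> nat \<Rightarrow> nat) \<Rightarrow> bool" where
  "zero_one_matrix N A \<longleftrightarrow> (\<forall>i\<in>{1..N}. \<forall>j\<in>{1..N}. A i j \<in> {0,1})"

definition irreducible_matrix :: "nat \<Rightarrow> (nat \<Rightarrow> nat \<Rightarrow> nat) \<Rightarrow> bool" where
  "irreducible_matrix N A \<longleftrightarrow> (\<forall>i\<in>{1..N}. \<forall>j\<in>{1..N}. \<exists>n>0. matpow N A n i j > 0)"

definition permutation_matrix :: "nat \<Rightarrow> (nat \<Rightarrow> nat \<Rightarrow> nat) \<Rightarrow> bool" where
  "permutation_matrix N A \<longleftrightarrow>
     (\<forall>i\<in>{1..N}. \<forall>j\<in>{1..N}. A i j \<in> {0,1}) \<and>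
     (\<forall>i\<in>{1..N}. \<exists>!j. j \<in> {1..N} \<and> A i j = 1) \<and>
     (\<forall>j\<in>{1..N}. \<exists>!i. i \<in> {1..N} \<and> A i j = 1)"

definition XA :: "nat \<Rightarrow> (nat \<Rightarrow> nat \<Rightarrow> nat) \<Rightarrow> (nat \<Rightarrow> nat) set" where
  "XA N A = {x. (\<forall>n. x n \<in> {1..N}) \<and> (\<forall>n. A (x n) (x (Suc n)) = 1)}"

definition shift :: "(nat \<Rightarrow> nat) \<Rightarrow> (nat \<Rightarrow> nat)" where
  "shift x = (\<lambda>n. x (Suc n))"

text \<open>Cohomology H^A: f and g have the same class iff f - g = u - u o shift, u continuous.\<close>

definition cohomologous :: "nat \<Rightarrow> (nat \<Rightarrow> nat \<Rightarrow> nat) \<Rightarrow> ((nat \<Rightarrow> nat) \<Rightarrow> int) \<Rightarrow> ((nat \<Rightarrow> nat) \<Rightarrow> int) \<Rightarrow> bool" where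
  "cohomologous N A f g \<longleftrightarrow>
     (\<exists>u. continuous_on (XA N A) u \<and> (\<forall>x\<in>XA N A. f x - g x = u x - u (shift x)))"

definition in_HA_plus :: "nat \<Rightarrow> (nat \<Rightarrow> nat \<Rightarrow> nat) \<Rightarrow> ((nat \<Rightarrow> nat) \<Rightarrow> int) \<Rightarrow> bool" where
  "in_HA_plus N A f \<longleftrightarrow>
     (\<exists>g. continuous_on (XA N A) g \<and> (\<forall>x\<in>XA N A. g x \<ge> 0) \<and> cohomologous N A f g)"

definition order_unit :: "nat \<Rightarrow> (nat \<Rightarrow> nat \<Rightarrow> nat) \<Rightarrow> ((nat \<Rightarrow> nat) \<Rightarrow> int) \<Rightarrow> bool" where
  "order_unit N A f \<longleftrightarrow> in_HA_plus N A f \<and>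
     (\<forall>u. continuous_on (XA N A) u \<longrightarrow>
        (\<exists>n::nat. in_HA_plus N A (\<lambda>x. int n * f x - u x)))"

definition suspension_triplet ::
  "nat \<Rightarrow> (nat \<Rightarrow> nat \<Rightarrow> nat) \<Rightarrow> ((nat \<Rightarrow> nat) \<Rightarrow> real) \<Rightarrow> ((nat \<Rightarrow> nat) \<Rightarrow> real) \<Rightarrow> ((nat \<Rightarrow> nat) \<Rightarrow> real) \<Rightarrow> bool" where
  "suspension_triplet N A l k b \<longleftrightarrow>
     continuous_on (XA N A) l \<and> (\<forall>x\<in>XA N A. l x \<ge> 0) \<and>
     continuous_on (XA N A) k \<and> (\<forall>x\<in>XA N A. k x \<ge> 0) \<and>
     continuous_on (XA N A) b \<and>
     (\<exists>c. continuous_on (XA N A) c \<and> (\<forall>x\<in>XA N A. l x - k x = of_int (c x)) \<and> order_unit N A c) \<and>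
     (\<forall>x\<in>XA N A. l x - b x \<in> \<int> \<and> l x - b x \<ge> 0) \<and>
     (\<forall>x\<in>XA N A. k x - b (shift x) \<in> \<int> \<and> k x - b (shift x) \<ge> 0)"

definition susp_dom :: "nat \<Rightarrow> (nat \<Rightarrow> nat \<Rightarrow> nat) \<Rightarrow> ((nat \<Rightarrow> nat) \<Rightarrow> real) \<Rightarrow> ((nat \<Rightarrow> nat) \<times> real) set" where
  "susp_dom N A b = {(x, r). x \<in> XA N A \<and> r \<ge> b x}"

definition susp_gen :: "nat \<Rightarrow> (nat \<Rightarrow> nat \<Rightarrow> nat) \<Rightarrow> ((nat \<Rightarrow> nat) \<Rightarrow> real) \<Rightarrow> ((nat \<Rightarrow> nat) \<Rightarrow> real) \<Rightarrow> ((nat \<Rightarrow> nat) \<Rightarrow> real)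
     \<Rightarrow> (((nat \<Rightarrow> nat) \<times> real) \<times> ((nat \<Rightarrow> nat) \<times> real)) set" where
  "susp_gen N A l k b = {((x, r), (shift x, r - (l x - k x))) | x r. (x, r) \<in> susp_dom N A b \<and> r \<ge> l x}"

definition susp_rel :: "nat \<Rightarrow> (nat \<Rightarrow> nat \<Rightarrow> nat) \<Rightarrow> ((nat \<Rightarrow> nat) \<Rightarrow> real) \<Rightarrow> ((nat \<Rightarrow> nat) \<Rightarrow> real) \<Rightarrow> ((nat \<Rightarrow> nat) \<Rightarrow> real)
     \<Rightarrow> (((nat \<Rightarrow> nat) \<times> real) \<times> ((nat \<Rightarrow> nat) \<times> real)) set" where
  "susp_rel N A l k b = Id_on (susp_dom N A b) \<union> (susp_gen N A l k b \<union> (susp_gen N A l k b)\<inverse>)\<^sup>+"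

definition susp_space :: "nat \<Rightarrow> (nat \<Rightarrow> nat \<Rightarrow> nat) \<Rightarrow> ((nat \<Rightarrow> nat) \<Rightarrow> real) \<Rightarrow> ((nat \<Rightarrow> nat) \<Rightarrow> real) \<Rightarrow> ((nat \<Rightarrow> nat) \<Rightarrow> real)
     \<Rightarrow> ((nat \<Rightarrow> nat) \<times> real) set topology" where
  "susp_space N A l k b = topology (\<lambda>U. U \<subseteq> susp_dom N A b // susp_rel N A l k b \<and>
        openin (top_of_set (susp_dom N A b)) (\<Union>U))"

definition susp_class where
  "susp_class N A l k b p = susp_rel N A l k b `` {p}"

definition base_map where
  "base_map N A l k b x = susp_class N A l k b (x, b x)"

definition susp_flow where
  "susp_flow N A l k b t C = susp_rel N A l k b `` ((\<lambda>(x, r). (x, r + t)) ` C)"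

end

theory Submission
  imports Defs
begin


lemma cont_disc: "continuous_on (S::'a::discrete_topology set) f"
  by (simp add: continuous_on_def at_discrete)

lemma cont_int_diff: "continuous_on S (u::'a::topological_space\<Rightarrow>int) \<Longrightarrow> continuous_on S v \<Longrightarrow> continuous_on S (\<lambda>x. u x - v x)"
proof -
  assume a: "continuous_on S u" "continuous_on S v"
  have "continuous_on S (\<lambda>x. uminus (v x))"
    using continuous_on_compose[OF a(2) cont_disc[of "v ` S" uminus]] by (simp add: o_def)
  from continuous_on_add[OF a(1) this] show ?thesis by simp
qed

lemma cont_of_int: "continuous_on S (u::'a::topological_space\<Rightarrow>int) \<Longrightarrow> continuous_on S (\<lambda>x. real_of_int (u x))"
  using continuous_on_compose[of S u real_of_int] cont_disc[of "u ` S" real_of_int] by (simp add: o_def)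

lemma in_HA_plus_transfer:
  assumes "in_HA_plus N A f" "cohomologous N A f g"
  shows "in_HA_plus N A g"
proof -
  obtain h v where h: "continuous_on (XA N A) h" "\<forall>x\<in>XA N A. h x \<ge> 0"
     and v: "continuous_on (XA N A) v" "\<forall>x\<in>XA N A. f x - h x = v x - v (shift x)"
    using assms(1) unfolding in_HA_plus_def cohomologous_def by blast
  obtain u where u: "continuous_on (XA N A) u" "\<forall>x\<in>XA N A. f x - g x = u x - u (shift x)"
    using assms(2) unfolding cohomologous_def by blast
  have "cohomologous N A g h"
    unfolding cohomologous_def
  proof (rule exI[of _ "\<lambda>x. v x - u x"], intro conjI ballI)
    show "continuous_on (XA N A) (\<lambda>x. v x - u x)" by (rule cont_int_diff[OF v(1) u(1)])
    fix x assume "x \<in> XA N A"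
    then have "f x - h x = v x - v (shift x)" "f x - g x = u x - u (shift x)" using v(2) u(2) by auto
    then show "g x - h x = (v x - u x) - (v (shift x) - u (shift x))" by linarith
  qed
  then show ?thesis using h unfolding in_HA_plus_def by blast
qed

lemma order_unit_transfer:
  assumes "order_unit N A f" "cohomologous N A f g"
  shows "order_unit N A g"
proof -
  obtain u where u: "continuous_on (XA N A) u" "\<forall>x\<in>XA N A. f x - g x = u x - u (shift x)"
    using assms(2) unfolding cohomologous_def by blast
  have "in_HA_plus N A g" using assms in_HA_plus_transfer unfolding order_unit_def by blast
  moreover have "\<exists>n::nat. in_HA_plus N A (\<lambda>x. int n * g x - v x)" if cv: "continuous_on (XA N A) v" for v
  proof -
    have "\<exists>n::nat. in_HA_plus N A (\<lambda>x. int n * f x - v x)"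
      using assms(1) cv unfolding order_unit_def by blast
    then obtain n::nat where n: "in_HA_plus N A (\<lambda>x. int n * f x - v x)" by blast
    have "cohomologous N A (\<lambda>x. int n * f x - v x) (\<lambda>x. int n * g x - v x)"
      unfolding cohomologous_def
    proof (rule exI[of _ "\<lambda>x. int n * u x"], intro conjI ballI)
      show "continuous_on (XA N A) (\<lambda>x. int n * u x)"
        using continuous_on_compose[OF u(1) cont_disc[of "u ` XA N A" "\<lambda>z. int n * z"]] by (simp add: o_def)
      fix x assume "x \<in> XA N A"
      then have "f x - g x = u x - u (shift x)" using u(2) by auto
      then have h: "int n * (f x - g x) = int n * u x - int n * u (shift x)" by (metis right_diff_distrib)
      have "int n * f x - v x - (int n * g x - v x) = int n * (f x - g x)" by (simp add: algebra_simps)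
      with h show "int n * f x - v x - (int n * g x - v x) = int n * u x - int n * u (shift x)"
        by simp
    qed
    then show ?thesis using n in_HA_plus_transfer by blast
  qed
  ultimately show ?thesis unfolding order_unit_def by blast
qed


definition qtop :: "'a::topological_space set \<Rightarrow> ('a\<times>'a) set \<Rightarrow> 'a set topology" where
  "qtop D R = topology (\<lambda>U. U \<subseteq> D//R \<and> openin (top_of_set D) (\<Union>U))"

lemma qtop_open:
  assumes "equiv D R"
  shows "openin (qtop D R) = (\<lambda>U. U \<subseteq> D//R \<and> openin (top_of_set D) (\<Union>U))"
  unfolding qtop_def
proof (rule topology_inverse')
  show "istopology (\<lambda>U. U \<subseteq> D // R \<and> openin (top_of_set D) (\<Union> U))"
    unfolding istopology_def
  proof (rule conjI; intro allI impI)
    fix S T assume S: "S \<subseteq> D // R \<and> openin (top_of_set D) (\<Union> S)"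
      and T: "T \<subseteq> D // R \<and> openin (top_of_set D) (\<Union> T)"
    have "\<Union>(S \<inter> T) = \<Union>S \<inter> \<Union>T"
    proof
      show "\<Union>S \<inter> \<Union>T \<subseteq> \<Union>(S \<inter> T)"
      proof
        fix z assume "z \<in> \<Union>S \<inter> \<Union>T"
        then obtain X Y where "X \<in> S" "Y \<in> T" "z \<in> X" "z \<in> Y" by blast
        moreover have "X \<in> D//R" "Y \<in> D//R" using S T \<open>X \<in> S\<close> \<open>Y \<in> T\<close> by (auto dest: conjunct1)
        moreover have "X = Y \<or> X \<inter> Y = {}"
          by (rule quotient_disj[OF assms]) fact+
        ultimately show "z \<in> \<Union>(S \<inter> T)" by blast
      qed
    qed blast
    moreover have "openin (top_of_set D) (\<Union>S \<inter> \<Union>T)" using S T by (intro openin_Int) simp_all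
    ultimately have "openin (top_of_set D) (\<Union> (S \<inter> T))" by simp
    then show "S \<inter> T \<subseteq> D // R \<and> openin (top_of_set D) (\<Union> (S \<inter> T))"
      using S by blast
  next
    fix K assume K: "\<forall>U\<in>K. U \<subseteq> D // R \<and> openin (top_of_set D) (\<Union> U)"
    have "\<Union>(\<Union>K) = \<Union>(Union ` K)" by auto
    moreover have "openin (top_of_set D) (\<Union>(Union ` K))" using K by (intro openin_Union) blast
    moreover have "\<Union>K \<subseteq> D // R" using K by auto
    ultimately show "\<Union>K \<subseteq> D // R \<and> openin (top_of_set D) (\<Union> (\<Union> K))"
      by simp
  qed
qed

lemma qtop_space:
  assumes "equiv D R"
  shows "topspace (qtop D R) = D//R"
proof -
  have "openin (qtop D R) (D//R)" using assms by (simp add: qtop_open Union_quotient)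
  moreover have "openin (qtop D R) U \<Longrightarrow> U \<subseteq> D//R" for U using assms by (simp add: qtop_open)
  ultimately show ?thesis unfolding topspace_def by blast
qed

lemma img_rel:
  assumes TS: "\<And>q. T (S q) = q" and TR: "\<And>p q. (p,q)\<in>R \<longleftrightarrow> (T p, T q)\<in>R'"
  shows "T ` (R``X) = R'``(T`X)"
proof
  show "T ` (R``X) \<subseteq> R'``(T`X)"
  proof
    fix y assume "y \<in> T ` (R``X)"
    then obtain p q where pq: "p \<in> X" "(p,q) \<in> R" "y = T q" by blast
    then have "(T p, T q) \<in> R'" using TR by simp
    then show "y \<in> R'``(T`X)" using pq by blast
  qed
  show "R'``(T`X) \<subseteq> T ` (R``X)"
  proof
    fix q' assume "q' \<in> R'``(T`X)"
    then obtain p where p: "p \<in> X" "(T p, q') \<in> R'" by auto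
    then have "(T p, T (S q')) \<in> R'" using TS by simp
    then have "(p, S q') \<in> R" using TR by simp
    then show "q' \<in> T ` (R``X)" using p(1) TS[of q'] by (metis ImageI image_eqI)
  qed
qed

lemma qmap_cont:
  assumes eR: "equiv D R" and eR': "equiv D' R'"
    and TS: "\<And>q. T (S q) = q"
    and TD: "\<And>p. p \<in> D \<longleftrightarrow> T p \<in> D'"
    and TR: "\<And>p q. (p,q)\<in>R \<longleftrightarrow> (T p, T q)\<in>R'"
    and cT: "continuous_on D T"
  shows "continuous_map (qtop D R) (qtop D' R') ((`) T)"
  unfolding continuous_map_def
proof (intro conjI allI impI)
  have cls: "T ` (R``{p}) = R'``{T p}" for p using img_rel[OF TS TR] by simp
  show "(`) T \<in> topspace (qtop D R) \<rightarrow> topspace (qtop D' R')"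
    unfolding qtop_space[OF eR] qtop_space[OF eR']
  proof
    fix C assume "C \<in> D//R"
    then obtain p where p: "p \<in> D" "C = R``{p}" by (rule quotientE) blast
    then have "T p \<in> D'" using TD by simp
    then show "T ` C \<in> D'//R'" using p(2) cls quotientI by metis
  qed
  fix V assume "openin (qtop D' R') V"
  then have V: "V \<subseteq> D'//R'" "openin (top_of_set D') (\<Union>V)" by (auto simp: qtop_open[OF eR'])
  define W where "W = {C \<in> topspace (qtop D R). T ` C \<in> V}"
  have W: "W \<subseteq> D//R" unfolding W_def qtop_space[OF eR] by blast
  have "\<Union>W = D \<inter> T -` \<Union>V"
  proof
    show "\<Union>W \<subseteq> D \<inter> T -` \<Union>V"
    proof
      fix z assume "z \<in> \<Union>W"
      then obtain C where C: "C \<in> W" "z \<in> C" by blast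
      then have "C \<in> D//R" using W by auto
      then have "z \<in> D" using C(2) Union_quotient[OF eR] by auto
      moreover have "T z \<in> \<Union>V" using C unfolding W_def by auto
      ultimately show "z \<in> D \<inter> T -` \<Union>V" by simp
    qed
    show "D \<inter> T -` \<Union>V \<subseteq> \<Union>W"
    proof
      fix z assume z: "z \<in> D \<inter> T -` \<Union>V"
      then obtain Y where Y: "Y \<in> V" "T z \<in> Y" by blast
      have "Y \<in> D'//R'" using V(1) Y(1) by blast
      then obtain q where q: "q \<in> D'" "Y = R'``{q}" by (rule quotientE) blast
      then have "(q, T z) \<in> R'" using Y by blast
      then have "R'``{T z} = Y" using q(2) equiv_class_eq[OF eR'] by simp
      then have "T ` (R``{z}) \<in> V" using cls Y by simp
      moreover have "R``{z} \<in> D//R" using z by (simp add: quotientI)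
      moreover have "z \<in> R``{z}" using z eR by (auto simp: equiv_def refl_on_def)
      ultimately show "z \<in> \<Union>W" unfolding W_def qtop_space[OF eR] by blast
    qed
  qed
  moreover have "openin (top_of_set D) (D \<inter> T -` \<Union>V)"
    by (rule continuous_openin_preimage[OF cT _ V(2)]) (use TD in \<open>auto simp: Pi_def\<close>)
  ultimately show "openin (qtop D R) W" using W by (simp add: qtop_open[OF eR])
qed

lemma qmap_homeo:
  assumes eR: "equiv D R" and eR': "equiv D' R'"
    and TS: "\<And>q. T (S q) = q" and ST: "\<And>p. S (T p) = p"
    and TD: "\<And>p. p \<in> D \<longleftrightarrow> T p \<in> D'"
    and TR: "\<And>p q. (p,q)\<in>R \<longleftrightarrow> (T p, T q)\<in>R'"
    and cT: "continuous_on D T" and cS: "continuous_on D' S"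
  shows "homeomorphic_map (qtop D R) (qtop D' R') ((`) T)"
  unfolding homeomorphic_map_maps homeomorphic_maps_def
proof (intro exI[of _ "(`) S"] conjI)
  show "continuous_map (qtop D R) (qtop D' R') ((`) T)" by (rule qmap_cont[OF assms(1,2,3,5,6,7)])
  have SD: "p \<in> D' \<longleftrightarrow> S p \<in> D" for p using TD[of "S p"] TS[of p] by simp
  have SR: "(p,q)\<in>R' \<longleftrightarrow> (S p, S q)\<in>R" for p q using TR[of "S p" "S q"] TS by simp
  show "continuous_map (qtop D' R') (qtop D R) ((`) S)" by (rule qmap_cont[OF eR' eR ST SD SR cS])
  show "\<forall>x\<in>topspace (qtop D R). S ` T ` x = x" using ST by (simp add: image_image)
  show "\<forall>x\<in>topspace (qtop D' R'). T ` S ` x = x" using TS by (simp add: image_image)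
qed


lemma trancl_map_rel:
  assumes "\<And>p q. (p,q)\<in>G \<Longrightarrow> (f p, f q)\<in>G'" "(p,q)\<in>G\<^sup>+"
  shows "(f p, f q)\<in>G'\<^sup>+"
  using assms(2)
proof (induct rule: trancl_induct)
  case (base y) then show ?case using assms(1) by (rule_tac r_into_trancl) blast
next
  case (step y z) then show ?case using assms(1) by (meson trancl_into_trancl)
qed
lemma rel_transport:
  assumes TS: "\<And>q. T (S q) = q" and ST: "\<And>p. S (T p) = p"
    and TD: "\<And>p. p \<in> D \<longleftrightarrow> T p \<in> D'"
    and TG: "\<And>p q. (p,q)\<in>G \<longleftrightarrow> (T p, T q)\<in>G'"
  shows "(p,q) \<in> Id_on D \<union> (G \<union> G\<inverse>)\<^sup>+ \<longleftrightarrow> (T p, T q) \<in> Id_on D' \<union> (G' \<union> G'\<inverse>)\<^sup>+"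
proof -
  have 1: "(T p, T q)\<in>G' \<union> G'\<inverse>" if "(p,q)\<in>G \<union> G\<inverse>" for p q
  proof -
    from that have "(p,q)\<in>G \<or> (q,p)\<in>G" by blast
    then have "(T p, T q)\<in>G' \<or> (T q, T p)\<in>G'" using TG[of p q, THEN iffD1] TG[of q p, THEN iffD1] by blast
    then show ?thesis by blast
  qed
  have 2: "(S p, S q)\<in>G \<union> G\<inverse>" if "(p,q)\<in>G' \<union> G'\<inverse>" for p q
  proof -
    from that have "(p,q)\<in>G' \<or> (q,p)\<in>G'" by blast
    then have "(T (S p), T (S q))\<in>G' \<or> (T (S q), T (S p))\<in>G'" by (simp only: TS)
    then have "(S p, S q)\<in>G \<or> (S q, S p)\<in>G" using TG[of "S p" "S q", THEN iffD2] TG[of "S q" "S p", THEN iffD2] by blast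
    then show ?thesis by blast
  qed
  have 3: "(p,q) \<in> Id_on D \<longleftrightarrow> (T p, T q) \<in> Id_on D'"
  proof
    assume "(p,q) \<in> Id_on D"
    then have "p = q" "p \<in> D" unfolding Id_on_iff by blast+
    then have "T p = T q" "T p \<in> D'" using TD[of p, THEN iffD1] by blast+
    then show "(T p, T q) \<in> Id_on D'" unfolding Id_on_iff by blast
  next
    assume "(T p, T q) \<in> Id_on D'"
    then have "T p = T q" "T p \<in> D'" unfolding Id_on_iff by blast+
    then have "S (T p) = S (T q)" "p \<in> D" using TD[of p, THEN iffD2] by simp_all
    then have "p = q" "p \<in> D" unfolding ST by blast+
    then show "(p,q) \<in> Id_on D" unfolding Id_on_iff by blast
  qed
  have 4: "(p,q) \<in> (G \<union> G\<inverse>)\<^sup>+ \<longleftrightarrow> (T p, T q) \<in> (G' \<union> G'\<inverse>)\<^sup>+"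
  proof
    assume "(p,q) \<in> (G \<union> G\<inverse>)\<^sup>+"
    then show "(T p, T q) \<in> (G' \<union> G'\<inverse>)\<^sup>+" by (rule trancl_map_rel[rotated]) (rule 1)
  next
    assume "(T p, T q) \<in> (G' \<union> G'\<inverse>)\<^sup>+"
    then have "(S (T p), S (T q)) \<in> (G \<union> G\<inverse>)\<^sup>+" by (rule trancl_map_rel[rotated]) (rule 2)
    then show "(p, q) \<in> (G \<union> G\<inverse>)\<^sup>+" using ST by simp
  qed
  show ?thesis by (simp only: Un_iff 3 4)
qed

lemma equiv_gen:
  assumes "G \<subseteq> D \<times> D"
  shows "equiv D (Id_on D \<union> (G \<union> G\<inverse>)\<^sup>+)"
proof (rule equivI)
  have "G \<union> G\<inverse> \<subseteq> D \<times> D" using assms by auto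
  then have sub: "(G \<union> G\<inverse>)\<^sup>+ \<subseteq> D \<times> D" by (rule trancl_subset_Sigma)
  then show "Id_on D \<union> (G \<union> G\<inverse>)\<^sup>+ \<subseteq> D \<times> D" by auto
  show "refl_on D (Id_on D \<union> (G \<union> G\<inverse>)\<^sup>+)" by (rule refl_onI) auto
  have sym: "sym ((G \<union> G\<inverse>)\<^sup>+)" by (intro sym_trancl) (auto simp: sym_def)
  show "sym (Id_on D \<union> (G \<union> G\<inverse>)\<^sup>+)"
    by (rule sym_Un[OF _ sym]) (auto simp: sym_def)
  show "trans (Id_on D \<union> (G \<union> G\<inverse>)\<^sup>+)"
  proof (rule transI)
    fix x y z assume a: "(x, y) \<in> Id_on D \<union> (G \<union> G\<inverse>)\<^sup>+" "(y, z) \<in> Id_on D \<union> (G \<union> G\<inverse>)\<^sup>+"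
    show "(x, z) \<in> Id_on D \<union> (G \<union> G\<inverse>)\<^sup>+"
    proof (cases "(x,y) \<in> Id_on D")
      case True then show ?thesis using a(2) by auto
    next
      case False
      then have xy: "(x,y) \<in> (G \<union> G\<inverse>)\<^sup>+" using a(1) by simp
      show ?thesis
      proof (cases "(y,z) \<in> Id_on D")
        case True then show ?thesis using xy by auto
      next
        case False
        then have "(y,z) \<in> (G \<union> G\<inverse>)\<^sup>+" using a(2) by simp
        with xy show ?thesis by (meson UnI2 trancl_trans)
      qed
    qed
  qed
qed

lemma closed_nat_any: "closed (S::nat set)"
  by (simp add: closed_def open_discrete)
lemma XA_compact: "compact (XA N A)"
proof -
  define P where "P = (PiE UNIV (\<lambda>_::nat. {1..N::nat}))"
  have "compactin (product_topology (\<lambda>_. euclidean) UNIV) P"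
    unfolding P_def by (subst compactin_PiE) (auto intro: finite_imp_compact)
  hence cP: "compact P" by (simp add: euclidean_product_topology)
  have P: "P = {x. \<forall>n. x n \<in> {1..N}}" unfolding P_def by (auto simp: PiE_def extensional_def)
  have eq: "XA N A = P \<inter> (\<Inter>n. \<Union>i\<in>{1..N}. ((\<lambda>x. x n) -` {i} \<inter> (\<lambda>x. x (Suc n)) -` {j. A i j = 1}))"
    unfolding XA_def P by auto
  have cl: "closed ((\<lambda>x::nat\<Rightarrow>nat. x m) -` S)" for m S
    by (rule closed_vimage[OF closed_nat_any continuous_on_product_coordinates])
  have "closed (\<Inter>n. \<Union>i\<in>{1..N}. ((\<lambda>x::nat\<Rightarrow>nat. x n) -` {i} \<inter> (\<lambda>x. x (Suc n)) -` {j. A i j = 1}))"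
    by (intro closed_INT closed_UN closed_Int finite_atLeastAtMost ballI cl)
  then show ?thesis unfolding eq using cP by blast
qed

lemma gen_iff:
  "(p,q) \<in> susp_gen N A l k b \<longleftrightarrow>
     fst q = shift (fst p) \<and> snd q = snd p - (l (fst p) - k (fst p)) \<and> p \<in> susp_dom N A b \<and> snd p \<ge> l (fst p)"
  by (cases p; cases q) (auto simp: susp_gen_def)

lemma shift_XA: "x \<in> XA N A \<Longrightarrow> shift x \<in> XA N A"
  by (simp add: XA_def shift_def)

lemma shift_cont: "continuous_on UNIV shift"
  unfolding shift_def by (intro continuous_on_coordinatewise_then_product continuous_on_product_coordinates)

lemma gen_sub:
  assumes "\<forall>x\<in>XA N A. k x - b (shift x) \<ge> 0"
  shows "susp_gen N A l k b \<subseteq> susp_dom N A b \<times> susp_dom N A b"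
proof
  fix z assume "z \<in> susp_gen N A l k b"
  then obtain p q where z: "z = (p,q)" and pq: "(p,q) \<in> susp_gen N A l k b" by (cases z) auto
  from pq have h: "fst q = shift (fst p)" "snd q = snd p - (l (fst p) - k (fst p))"
     "p \<in> susp_dom N A b" "snd p \<ge> l (fst p)" unfolding gen_iff by auto
  then have x: "fst p \<in> XA N A" by (cases p) (simp add: susp_dom_def)
  then have "shift (fst p) \<in> XA N A" by (rule shift_XA)
  moreover have "snd q \<ge> b (shift (fst p))" using h(2,4) assms x by force
  ultimately have "q \<in> susp_dom N A b" using h(1) by (cases q) (simp add: susp_dom_def)
  then show "z \<in> susp_dom N A b \<times> susp_dom N A b" using z h(3) by simp
qed

theorem lemma2p6:
  fixes N :: nat and A :: "nat \<Rightarrow> nat \<Rightarrow> nat"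
    and l k b :: "(nat \<Rightarrow> nat) \<Rightarrow> real" and c c' :: "(nat \<Rightarrow> nat) \<Rightarrow> int"
  assumes "N > 1"
    and "zero_one_matrix N A"
    and "irreducible_matrix N A"
    and "\<not> permutation_matrix N A"
    and "suspension_triplet N A l k b"
    and "continuous_on (XA N A) c"
    and "\<forall>x\<in>XA N A. real_of_int (c x) = l x - k x"
    and "continuous_on (XA N A) c'"
    and "cohomologous N A c c'"
  shows "\<exists>l' k' b'. suspension_triplet N A l' k' b' \<and>
           (\<forall>x\<in>XA N A. real_of_int (c' x) = l' x - k' x) \<and>
           (\<exists>\<Phi>. homeomorphic_map (susp_space N A l k b) (susp_space N A l' k' b') \<Phi> \<and>
                (\<forall>x\<in>XA N A. \<Phi> (base_map N A l k b x) = base_map N A l' k' b' x) \<and>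
                (\<forall>t::real. t \<ge> 0 \<longrightarrow>
                   (\<forall>C\<in>topspace (susp_space N A l k b).
                      \<Phi> (susp_flow N A l k b t C) = susp_flow N A l' k' b' t (\<Phi> C))))"
proof -
  let ?X = "XA N A"
  from assms(5) have cl: "continuous_on ?X l" and l0: "\<forall>x\<in>?X. l x \<ge> 0"
    and ck: "continuous_on ?X k" and k0: "\<forall>x\<in>?X. k x \<ge> 0" and cb: "continuous_on ?X b"
    and ex0: "\<exists>c. continuous_on ?X c \<and> (\<forall>x\<in>?X. l x - k x = of_int (c x)) \<and> order_unit N A c"
    and lb: "\<forall>x\<in>?X. l x - b x \<in> \<int> \<and> l x - b x \<ge> 0"
    and kb: "\<forall>x\<in>?X. k x - b (shift x) \<in> \<int> \<and> k x - b (shift x) \<ge> 0"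
    unfolding suspension_triplet_def by blast+
  from ex0 obtain c0 where c0: "continuous_on ?X c0" "\<forall>x\<in>?X. l x - k x = of_int (c0 x)" "order_unit N A c0"
    by blast
  from assms(9) obtain u where cu: "continuous_on ?X u" and hu: "\<forall>x\<in>?X. c x - c' x = u x - u (shift x)"
    unfolding cohomologous_def by blast
  have "compact ((\<lambda>x. real_of_int (u x)) ` ?X)"
    by (rule compact_continuous_image[OF cont_of_int[OF cu] XA_compact])
  then have "bdd_above ((\<lambda>x. real_of_int (u x)) ` ?X)"
    by (intro bounded_imp_bdd_above compact_imp_bounded)
  then obtain M where M: "\<forall>x\<in>?X. real_of_int (u x) \<le> M"
    unfolding bdd_above_def by blast
  define w where "w = (\<lambda>x. M - real_of_int (u x))"
  define l' where "l' = (\<lambda>x. l x + w x)"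
  define k' where "k' = (\<lambda>x. k x + w (shift x))"
  define b' where "b' = (\<lambda>x. b x + w x)"
  have w0: "\<forall>x\<in>?X. w x \<ge> 0" using M by (simp add: w_def)
  have cw: "continuous_on ?X w" unfolding w_def by (intro continuous_intros cont_of_int cu)
  have shX: "shift ` ?X \<subseteq> ?X" using shift_XA by blast
  have cws: "continuous_on ?X (\<lambda>x. w (shift x))"
    by (rule continuous_on_compose2[OF cw continuous_on_subset[OF shift_cont] shX]) simp
  have cc': "\<forall>x\<in>?X. real_of_int (c' x) = l' x - k' x"
  proof
    fix x assume x: "x \<in> ?X"
    have "real_of_int (c x - c' x) = real_of_int (u x - u (shift x))" using hu x by simp
    then have "real_of_int (c x) - real_of_int (c' x) = real_of_int (u x) - real_of_int (u (shift x))" by simp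
    then show "real_of_int (c' x) = l' x - k' x" using assms(7) x by (simp add: l'_def k'_def w_def)
  qed
  have coh: "cohomologous N A c0 c'"
    unfolding cohomologous_def
  proof (rule exI[of _ u], intro conjI ballI)
    show "continuous_on ?X u" by (rule cu)
    fix x assume x: "x \<in> ?X"
    have "real_of_int (c0 x) = real_of_int (c x)" using c0(2) assms(7) x by simp
    then have "c0 x = c x" by simp
    then show "c0 x - c' x = u x - u (shift x)" using hu x by simp
  qed
  have trip: "suspension_triplet N A l' k' b'"
    unfolding suspension_triplet_def
  proof (intro conjI)
    show "continuous_on ?X l'" unfolding l'_def by (intro continuous_on_add cl cw)
    show "\<forall>x\<in>?X. 0 \<le> l' x" using l0 w0 by (simp add: l'_def)
    show "continuous_on ?X k'" unfolding k'_def by (intro continuous_on_add ck cws)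
    show "\<forall>x\<in>?X. 0 \<le> k' x" using k0 w0 shift_XA by (simp add: k'_def add_nonneg_nonneg)
    show "continuous_on ?X b'" unfolding b'_def by (intro continuous_on_add cb cw)
    show "\<exists>c. continuous_on ?X c \<and> (\<forall>x\<in>?X. l' x - k' x = of_int (c x)) \<and> order_unit N A c"
      using assms(8) cc' order_unit_transfer[OF c0(3) coh] by (intro exI[of _ c']) simp
    show "\<forall>x\<in>?X. l' x - b' x \<in> \<int> \<and> 0 \<le> l' x - b' x" using lb by (simp add: l'_def b'_def)
    show "\<forall>x\<in>?X. k' x - b' (shift x) \<in> \<int> \<and> 0 \<le> k' x - b' (shift x)" using kb by (simp add: k'_def b'_def)
  qed
  define T where "T = (\<lambda>p::(nat\<Rightarrow>nat)\<times>real. (fst p, snd p + w (fst p)))"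
  define S where "S = (\<lambda>p::(nat\<Rightarrow>nat)\<times>real. (fst p, snd p - w (fst p)))"
  let ?D = "susp_dom N A b" and ?D' = "susp_dom N A b'"
  let ?R = "susp_rel N A l k b" and ?R' = "susp_rel N A l' k' b'"
  have TS: "T (S q) = q" for q by (simp add: T_def S_def)
  have ST: "S (T p) = p" for p by (simp add: T_def S_def)
  have TD: "p \<in> ?D \<longleftrightarrow> T p \<in> ?D'" for p by (cases p) (simp add: T_def susp_dom_def b'_def)
  have TG: "(p,q) \<in> susp_gen N A l k b \<longleftrightarrow> (T p, T q) \<in> susp_gen N A l' k' b'" for p q
    unfolding gen_iff TD[of p, symmetric]
    by (cases p; cases q) (auto simp: T_def l'_def k'_def)
  have TR: "(p,q) \<in> ?R \<longleftrightarrow> (T p, T q) \<in> ?R'" for p q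
    unfolding susp_rel_def by (rule rel_transport[OF TS ST TD TG])
  have eR: "equiv ?D ?R" unfolding susp_rel_def
    by (rule equiv_gen[OF gen_sub]) (use kb in auto)
  have kb': "\<forall>x\<in>?X. k' x - b' (shift x) \<ge> 0" using kb by (simp add: k'_def b'_def)
  have eR': "equiv ?D' ?R'" unfolding susp_rel_def
    by (rule equiv_gen[OF gen_sub[OF kb']])
  have cT: "continuous_on ?D T"
  proof -
    have "continuous_on ?D (\<lambda>p. w (fst p))"
      by (rule continuous_on_compose2[OF cw continuous_on_fst[OF continuous_on_id]]) (auto simp: susp_dom_def)
    then show ?thesis unfolding T_def by (intro continuous_intros)
  qed
  have cS: "continuous_on ?D' S"
  proof -
    have "continuous_on ?D' (\<lambda>p. w (fst p))"
      by (rule continuous_on_compose2[OF cw continuous_on_fst[OF continuous_on_id]]) (auto simp: susp_dom_def)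
    then show ?thesis unfolding S_def by (intro continuous_intros)
  qed
  have sp: "susp_space N A l k b = qtop ?D ?R" unfolding susp_space_def qtop_def ..
  have sp': "susp_space N A l' k' b' = qtop ?D' ?R'" unfolding susp_space_def qtop_def ..
  have hom: "homeomorphic_map (susp_space N A l k b) (susp_space N A l' k' b') ((`) T)"
    unfolding sp sp' by (rule qmap_homeo[OF eR eR' TS ST TD TR cT cS])
  have base: "\<forall>x\<in>?X. T ` (base_map N A l k b x) = base_map N A l' k' b' x"
  proof
    fix x assume "x \<in> ?X"
    have "T ` (?R `` {(x, b x)}) = ?R' `` (T ` {(x, b x)})" by (rule img_rel[OF TS TR])
    then show "T ` (base_map N A l k b x) = base_map N A l' k' b' x"
      by (simp add: base_map_def susp_class_def T_def b'_def)
  qed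
  have flow: "T ` (susp_flow N A l k b t C) = susp_flow N A l' k' b' t (T ` C)" for t C
  proof -
    have comm: "T ((\<lambda>(x, r). (x, r + t)) p) = (\<lambda>(x, r). (x, r + t)) (T p)" for p
      by (cases p) (simp add: T_def)
    have "T ` (?R `` ((\<lambda>(x, r). (x, r + t)) ` C)) = ?R' `` (T ` ((\<lambda>(x, r). (x, r + t)) ` C))"
      by (rule img_rel[OF TS TR])
    also have "T ` ((\<lambda>(x, r). (x, r + t)) ` C) = (\<lambda>(x, r). (x, r + t)) ` (T ` C)"
      unfolding image_image comm ..
    finally show ?thesis by (simp add: susp_flow_def)
  qed
  show ?thesis
    by (rule exI[of _ l'], rule exI[of _ k'], rule exI[of _ b'])
       (use trip cc' hom base flow in blast)
qed

end
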